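(* Let $\rho\in C_1(\widetilde\Gamma,\widetilde H;\mathbb{Q})$ be a non-geometric Nielsen 1-chain for $f$ relative to $H$. There is a constant $B\ge1$ such that for all pairwise distinct $g_1,\dots,g_r\in\mathbb{F}$, all $q_1,\dots,q_r\in\mathbb{Q}$, $x=q_1g_1\rho+\cdots+q_rg_r\rho$, and all $k\ge0$, $$\sum_{j=1}^rq_j^2\le\|A_{f,H}^k(x)\|^2\le B\sum_{j=1}^rq_j^2.$$
   Context: Setup: $\mathbb{F}$ finitely generated free, $\Gamma$ a finite connected graph with $\pi_1(\Gamma)\cong\mathbb{F}$, $f$ a homotopy equivalence, cellular and edge-linear, $H\subset\Gamma$ a subgraph with $f(H)\subseteq H$, $\widetilde\Gamma$ the universal cover with deck action of $\mathbb{F}$, $\widetilde H$ the preimage of $H$, $\tilde f$ a fixed lift with $\tilde f(gz)=\Phi_f(g)\tilde f(z)$. $C_1(\widetilde\Gamma;\mathbb{Q})$: finitely supported rational 1-chains $x=\sum_ex_ee$; $A_f$ induced by $\tilde f$; $C_1(\widetilde\Gamma,\widetilde H;\mathbb{Q})$ chains vanishing on edges of $\widetilde H$; $\pi_H^\perp$ the projection onto it; $A_{f,H}=\pi_H^\perp\circ A_f|_{C_1(\widetilde\Gamma,\widetilde H;\mathbb Q)}$; $\|x\|^2=\sum_ex_e^2$. $[u,v]$ is the 1-chain of the reduced edge-path from $u$ to $v$ (coefficients $\pm1$ on its edges). A non-geometric Nielsen 1-chain is $\rho=\pi_H^\perp([u,v])$ with $u,v$ vertices fixed by $\tilde f$ such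 that some edge $e\notin\widetilde H$ has $\rho_e=\pm1$ and $\rho_{ge}=0$ for every nontrivial $g\in\mathbb{F}$. (Note $A_{f,H}(g\rho)=\Phi_f(g)\rho$.) *)

theory Defs
  imports Complex_Main "HOL-Algebra.Group"
begin

text \<open>The universal cover is modelled as an oriented graph on vertex type 'v and edge
type 'e with source/target maps src, tgt.  An oriented edge traversal is a pair
(e, b): b = True means e is traversed from src e to tgt e, b = False backwards.\<close>

definition ostart :: "('e \<Rightarrow> 'v) \<Rightarrow> ('e \<Rightarrow> 'v) \<Rightarrow> 'e \<times> bool \<Rightarrow> 'v" where
  "ostart src tgt d = (if snd d then src (fst d) else tgt (fst d))"

definition oend :: "('e \<Rightarrow> 'v) \<Rightarrow> ('e \<Rightarrow> 'v) \<Rightarrow> 'e \<times> bool \<Rightarrow> 'v" where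
  "oend src tgt d = (if snd d then tgt (fst d) else src (fst d))"

fun path_from :: "('e \<Rightarrow> 'v) \<Rightarrow> ('e \<Rightarrow> 'v) \<Rightarrow> 'v \<Rightarrow> ('e \<times> bool) list \<Rightarrow> 'v \<Rightarrow> bool" where
  "path_from src tgt u [] v = (u = v)"
| "path_from src tgt u (d # ds) v = (ostart src tgt d = u \<and> path_from src tgt (oend src tgt d) ds v)"

fun reduced :: "('e \<times> bool) list \<Rightarrow> bool" where
  "reduced (d1 # d2 # ds) = (\<not> (fst d1 = fst d2 \<and> snd d1 \<noteq> snd d2) \<and> reduced (d2 # ds))"
| "reduced _ = True"

definition path_chain :: "('e \<times> bool) list \<Rightarrow> 'e \<Rightarrow> rat" where
  "path_chain ds = (\<lambda>e. \<Sum>d\<leftarrow>ds. if fst d = e then (if snd d then 1 else -1) else 0)"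

definition is_tree :: "('e \<Rightarrow> 'v) \<Rightarrow> ('e \<Rightarrow> 'v) \<Rightarrow> bool" where
  "is_tree src tgt \<longleftrightarrow>
     (\<forall>u v. \<exists>ds. path_from src tgt u ds v) \<and>
     (\<forall>u ds. path_from src tgt u ds u \<and> reduced ds \<longrightarrow> ds = [])"

text \<open>[u,v]: the 1-chain of the reduced edge path from u to v (unique in a tree)\<close>
definition geod_chain :: "('e \<Rightarrow> 'v) \<Rightarrow> ('e \<Rightarrow> 'v) \<Rightarrow> 'v \<Rightarrow> 'v \<Rightarrow> 'e \<Rightarrow> rat" where
  "geod_chain src tgt u v = path_chain (THE ds. path_from src tgt u ds v \<and> reduced ds)"

text \<open>Deck action of F: free, orientation preserving, cocompact (finite quotient graph).\<close>
definition deck_action ::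
  "('g, 'z) monoid_scheme \<Rightarrow> ('g \<Rightarrow> 'v \<Rightarrow> 'v) \<Rightarrow> ('g \<Rightarrow> 'e \<Rightarrow> 'e)
     \<Rightarrow> ('e \<Rightarrow> 'v) \<Rightarrow> ('e \<Rightarrow> 'v) \<Rightarrow> bool" where
  "deck_action G act acte src tgt \<longleftrightarrow>
     group G \<and>
     (\<forall>v. act \<one>\<^bsub>G\<^esub> v = v) \<and> (\<forall>e. acte \<one>\<^bsub>G\<^esub> e = e) \<and>
     (\<forall>g\<in>carrier G. \<forall>h\<in>carrier G. \<forall>v. act (g \<otimes>\<^bsub>G\<^esub> h) v = act g (act h v)) \<and>
     (\<forall>g\<in>carrier G. \<forall>h\<in>carrier G. \<forall>e. acte (g \<otimes>\<^bsub>G\<^esub> h) e = acte g (acte h e)) \<and>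
     (\<forall>g\<in>carrier G. \<forall>e. src (acte g e) = act g (src e) \<and> tgt (acte g e) = act g (tgt e)) \<and>
     (\<forall>g\<in>carrier G. \<forall>v. act g v = v \<longrightarrow> g = \<one>\<^bsub>G\<^esub>) \<and>
     finite (range (\<lambda>v. (\<lambda>g. act g v) ` carrier G)) \<and>
     finite (range (\<lambda>e. (\<lambda>g. acte g e) ` carrier G))"

text \<open>The lift of f: vertex map fv and edge-path images fe; Phi = Phi_f (an automorphism,
f being a homotopy equivalence), with the twisted equivariance.\<close>
definition lifted_map ::
  "('g, 'z) monoid_scheme \<Rightarrow> ('g \<Rightarrow> 'v \<Rightarrow> 'v) \<Rightarrow> ('g \<Rightarrow> 'e \<Rightarrow> 'e)
     \<Rightarrow> ('e \<Rightarrow> 'v) \<Rightarrow> ('e \<Rightarrow> 'v) \<Rightarrow> ('g \<Rightarrow> 'g)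
     \<Rightarrow> ('v \<Rightarrow> 'v) \<Rightarrow> ('e \<Rightarrow> ('e \<times> bool) list) \<Rightarrow> bool" where
  "lifted_map G act acte src tgt Phi fv fe \<longleftrightarrow>
     Phi \<in> iso G G \<and>
     (\<forall>e. path_from src tgt (fv (src e)) (fe e) (fv (tgt e))) \<and>
     (\<forall>g\<in>carrier G. \<forall>v. fv (act g v) = act (Phi g) (fv v)) \<and>
     (\<forall>g\<in>carrier G. \<forall>e. fe (acte g e) = map (\<lambda>d. (acte (Phi g) (fst d), snd d)) (fe e))"

text \<open>H tilde: the (F-invariant) preimage of a subgraph H with f(H) \<subseteq> H.\<close>
definition invariant_subgraph ::
  "('g, 'z) monoid_scheme \<Rightarrow> ('g \<Rightarrow> 'v \<Rightarrow> 'v) \<Rightarrow> ('g \<Rightarrow> 'e \<Rightarrow> 'e)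
     \<Rightarrow> ('e \<Rightarrow> 'v) \<Rightarrow> ('e \<Rightarrow> 'v)
     \<Rightarrow> ('v \<Rightarrow> 'v) \<Rightarrow> ('e \<Rightarrow> ('e \<times> bool) list) \<Rightarrow> 'v set \<Rightarrow> 'e set \<Rightarrow> bool" where
  "invariant_subgraph G act acte src tgt fv fe Hv He \<longleftrightarrow>
     (\<forall>e\<in>He. src e \<in> Hv \<and> tgt e \<in> Hv) \<and>
     (\<forall>g\<in>carrier G. \<forall>v\<in>Hv. act g v \<in> Hv) \<and>
     (\<forall>g\<in>carrier G. \<forall>e\<in>He. acte g e \<in> He) \<and>
     (\<forall>v\<in>Hv. fv v \<in> Hv) \<and>
     (\<forall>e\<in>He. \<forall>d\<in>set (fe e). fst d \<in> He)"

text \<open>Chains are functions 'e \<Rightarrow> rat (finitely supported ones are used).\<close>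
definition chain_supp :: "('e \<Rightarrow> rat) \<Rightarrow> 'e set" where
  "chain_supp x = {e. x e \<noteq> 0}"

definition normsq :: "('e \<Rightarrow> rat) \<Rightarrow> rat" where
  "normsq x = (\<Sum>e\<in>chain_supp x. (x e)^2)"

definition Af :: "('e \<Rightarrow> ('e \<times> bool) list) \<Rightarrow> ('e \<Rightarrow> rat) \<Rightarrow> 'e \<Rightarrow> rat" where
  "Af fe x = (\<lambda>e'. \<Sum>e\<in>chain_supp x. x e * path_chain (fe e) e')"

text \<open>projection onto C_1(tilde Gamma, tilde H)\<close>
definition projH :: "'e set \<Rightarrow> ('e \<Rightarrow> rat) \<Rightarrow> 'e \<Rightarrow> rat" where
  "projH He x = (\<lambda>e. if e \<in> He then 0 else x e)"

definition AfH :: "'e set \<Rightarrow> ('e \<Rightarrow> ('e \<times> bool) list) \<Rightarrow> ('e \<Rightarrow> rat) \<Rightarrow> 'e \<Rightarrow> rat" where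
  "AfH He fe x = projH He (Af fe x)"

definition chain_act ::
  "('g, 'z) monoid_scheme \<Rightarrow> ('g \<Rightarrow> 'e \<Rightarrow> 'e) \<Rightarrow> 'g \<Rightarrow> ('e \<Rightarrow> rat) \<Rightarrow> 'e \<Rightarrow> rat" where
  "chain_act G acte g x = (\<lambda>e. x (acte (inv\<^bsub>G\<^esub> g) e))"

definition nongeometric_nielsen ::
  "('g, 'z) monoid_scheme \<Rightarrow> ('g \<Rightarrow> 'e \<Rightarrow> 'e) \<Rightarrow> ('e \<Rightarrow> 'v) \<Rightarrow> ('e \<Rightarrow> 'v)
     \<Rightarrow> ('v \<Rightarrow> 'v) \<Rightarrow> 'e set \<Rightarrow> ('e \<Rightarrow> rat) \<Rightarrow> bool" where
  "nongeometric_nielsen G acte src tgt fv He rho \<longleftrightarrow>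
     (\<exists>u v. fv u = u \<and> fv v = v \<and> rho = projH He (geod_chain src tgt u v) \<and>
        (\<exists>e. e \<notin> He \<and> (rho e = 1 \<or> rho e = -1) \<and>
             (\<forall>g\<in>carrier G. g \<noteq> \<one>\<^bsub>G\<^esub> \<longrightarrow> rho (acte g e) = 0)))"

end

theory Submission
  imports Defs
begin


definition cancel :: "'e \<times> bool \<Rightarrow> 'e \<times> bool \<Rightarrow> bool" where
  "cancel a b \<longleftrightarrow> fst a = fst b \<and> snd a \<noteq> snd b"

definition flip :: "'e \<times> bool \<Rightarrow> 'e \<times> bool" where
  "flip d = (fst d, \<not> snd d)"

definition pinv :: "('e \<times> bool) list \<Rightarrow> ('e \<times> bool) list" where
  "pinv ds = rev (map flip ds)"

lemma reduced_Cons: "reduced (a # xs) \<longleftrightarrow> reduced xs \<and> (xs \<noteq> [] \<longrightarrow> \<not> cancel a (hd xs))"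
  by (cases xs) (auto simp: cancel_def)

lemma reduced_append:
  "reduced (xs @ ys) \<longleftrightarrow> reduced xs \<and> reduced ys \<and> (xs \<noteq> [] \<and> ys \<noteq> [] \<longrightarrow> \<not> cancel (last xs) (hd ys))"
  by (induction xs) (auto simp: reduced_Cons)

lemma cancel_flip: "cancel (flip a) (flip b) = cancel b a"
  by (auto simp: cancel_def flip_def)

lemma pinv_Cons: "pinv (a # xs) = pinv xs @ [flip a]"
  by (simp add: pinv_def)

lemma pinv_Nil[simp]: "pinv [] = []"
  by (simp add: pinv_def)

lemma pinv_eq_Nil[simp]: "pinv ds = [] \<longleftrightarrow> ds = []"
  by (simp add: pinv_def)

lemma last_pinv: "xs \<noteq> [] \<Longrightarrow> last (pinv xs) = flip (hd xs)"
  by (cases xs) (auto simp: pinv_def)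

lemma hd_pinv: "xs \<noteq> [] \<Longrightarrow> hd (pinv xs) = flip (last xs)"
  by (simp add: pinv_def hd_rev last_map)

lemma reduced_pinv: "reduced ds \<Longrightarrow> reduced (pinv ds)"
  by (induction ds) (auto simp: reduced_Cons pinv_Cons reduced_append last_pinv cancel_flip)

lemma path_append:
  "path_from src tgt u (xs @ ys) v \<longleftrightarrow> (\<exists>w. path_from src tgt u xs w \<and> path_from src tgt w ys v)"
  by (induction xs arbitrary: u) auto

lemma path_pinv: "path_from src tgt u ds v \<Longrightarrow> path_from src tgt v (pinv ds) u"
  by (induction ds arbitrary: u) (auto simp: pinv_Cons path_append ostart_def oend_def flip_def)

lemma path_chain_Cons: "path_chain (d # ds) e = (if fst d = e then (if snd d then 1 else -1) else 0) + path_chain ds e"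
  by (simp add: path_chain_def)

lemma path_chain_Nil: "path_chain [] e = 0"
  by (simp add: path_chain_def)

lemma path_chain_append: "path_chain (xs @ ys) e = path_chain xs e + path_chain ys e"
  by (simp add: path_chain_def)

lemma path_chain_pinv: "path_chain (pinv ds) e = - path_chain ds e"
  by (induction ds) (auto simp: pinv_Cons path_chain_append path_chain_Cons path_chain_Nil flip_def)

lemma not_reduced_split: "\<not> reduced ds \<Longrightarrow> \<exists>xs a b ys. ds = xs @ a # b # ys \<and> cancel a b"
proof (induction ds rule: reduced.induct)
  case (1 d1 d2 ds)
  show ?case
  proof (cases "cancel d1 d2")
    case True then show ?thesis by (metis append_Nil)
  next
    case False
    with 1 have "\<not> reduced (d2 # ds)" by (auto simp: cancel_def)
    with 1 False obtain xs a b ys where "d2 # ds = xs @ a # b # ys" "cancel a b"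
      by (auto simp: cancel_def)
    then show ?thesis by (metis append_Cons)
  qed
qed auto

lemma reduce_exists:
  "path_from src tgt u ds v \<Longrightarrow> \<exists>ds'. path_from src tgt u ds' v \<and> reduced ds' \<and> path_chain ds' = path_chain ds"
proof (induction "length ds" arbitrary: ds rule: less_induct)
  case less
  show ?case
  proof (cases "reduced ds")
    case True then show ?thesis using less.prems by blast
  next
    case False
    then obtain xs a b ys where ds: "ds = xs @ a # b # ys" "cancel a b"
      using not_reduced_split by blast
    from less.prems ds obtain w where w: "path_from src tgt u xs w" "path_from src tgt w (a # b # ys) v"
      using path_append by metis
    have "path_from src tgt w ys v" using w(2) ds(2)
      by (auto simp: cancel_def ostart_def oend_def split: if_splits)
    then have p: "path_from src tgt u (xs @ ys) v" using w(1) path_append by metis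
    have c: "path_chain (xs @ ys) = path_chain ds"
      using ds by (auto simp: fun_eq_iff path_chain_append path_chain_Cons cancel_def)
    have "length (xs @ ys) < length ds" using ds by simp
    from less.hyps[OF this p] c show ?thesis by metis
  qed
qed

lemma path_snoc: "path_from src tgt u (p @ [c]) v \<Longrightarrow> path_from src tgt u p (ostart src tgt c)"
  by (auto simp: path_append)

lemma reduced_unique:
  assumes tree: "is_tree src tgt"
  shows "reduced ds1 \<Longrightarrow> reduced ds2 \<Longrightarrow> path_from src tgt u ds1 v \<Longrightarrow> path_from src tgt u ds2 v \<Longrightarrow> ds1 = ds2"
proof (induction "length ds1" arbitrary: ds1 ds2 v rule: less_induct)
  case less
  have closed: "\<And>w ds. path_from src tgt w ds w \<Longrightarrow> reduced ds \<Longrightarrow> ds = []"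
    using tree by (auto simp: is_tree_def)
  show ?case
  proof (cases "ds1 = []")
    case True
    then show ?thesis using less.prems closed by auto
  next
    case n1: False
    show ?thesis
    proof (cases "ds2 = []")
      case True
      then show ?thesis using less.prems closed by auto
    next
      case n2: False
      show ?thesis
      proof (cases "last ds1 = last ds2")
        case True
        obtain p1 c where d1: "ds1 = p1 @ [c]" using n1 by (metis append_butlast_last_id)
        obtain p2 where d2: "ds2 = p2 @ [c]" using n2 True d1 by (metis append_butlast_last_id last_snoc)
        have r1: "reduced p1" "reduced p2" using d1 d2 less.prems reduced_append by blast+
        have q1: "path_from src tgt u p1 (ostart src tgt c)" using d1 less.prems(3) by (simp add: path_snoc)
        have q2: "path_from src tgt u p2 (ostart src tgt c)" using d2 less.prems(4) by (simp add: path_snoc)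
        have "p1 = p2"
          by (rule less.hyps[OF _ r1 q1 q2]) (simp add: d1)
        then show ?thesis using d1 d2 by simp
      next
        case False
        have "reduced (ds1 @ pinv ds2)"
          using less.prems reduced_pinv n1 n2 False hd_pinv[OF n2]
          by (auto simp: reduced_append cancel_def flip_def prod_eq_iff)
        moreover have "path_from src tgt u (ds1 @ pinv ds2) u"
          using less.prems path_pinv path_append by metis
        ultimately show ?thesis using closed n1 by blast
      qed
    qed
  qed
qed

lemma geod_path:
  assumes tree: "is_tree src tgt" and p: "path_from src tgt u ds v"
  shows "geod_chain src tgt u v = path_chain ds"
proof -
  obtain ds' where ds': "path_from src tgt u ds' v" "reduced ds'" "path_chain ds' = path_chain ds"
    using reduce_exists[OF p] by blast
  have "(THE ds. path_from src tgt u ds v \<and> reduced ds) = ds'"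
    apply (rule the_equality)
    using ds' reduced_unique[OF tree] by blast+
  then show ?thesis using ds' by (simp add: geod_chain_def)
qed



abbreviation fin :: "('e \<Rightarrow> rat) \<Rightarrow> bool" where "fin x \<equiv> finite (chain_supp x)"

lemma Af_eq: "finite S \<Longrightarrow> chain_supp x \<subseteq> S \<Longrightarrow> Af fe x e' = (\<Sum>e\<in>S. x e * path_chain (fe e) e')"
  unfolding Af_def by (rule sum.mono_neutral_left) (auto simp: chain_supp_def)

lemma Af_lin:
  assumes "finite J" "\<And>j. j \<in> J \<Longrightarrow> fin (y j)"
  shows "Af fe (\<lambda>e. \<Sum>j\<in>J. c j * y j e) = (\<lambda>e'. \<Sum>j\<in>J. c j * Af fe (y j) e')"
proof
  fix e'
  define S where "S = (\<Union>j\<in>J. chain_supp (y j))"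
  have fS: "finite S" using assms by (simp add: S_def)
  have sub: "chain_supp (\<lambda>e. \<Sum>j\<in>J. c j * y j e) \<subseteq> S"
    by (auto simp: chain_supp_def S_def intro: ccontr)
  have "Af fe (\<lambda>e. \<Sum>j\<in>J. c j * y j e) e' = (\<Sum>e\<in>S. (\<Sum>j\<in>J. c j * y j e) * path_chain (fe e) e')"
    by (rule Af_eq[OF fS sub])
  also have "\<dots> = (\<Sum>j\<in>J. c j * (\<Sum>e\<in>S. y j e * path_chain (fe e) e'))"
    by (simp add: sum_distrib_right sum_distrib_left sum.swap[of _ S] mult.assoc)
  also have "\<dots> = (\<Sum>j\<in>J. c j * Af fe (y j) e')"
    by (rule sum.cong[OF refl]) (simp add: Af_eq[OF fS] S_def, subst Af_eq[OF fS], auto simp: S_def)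
  finally show "Af fe (\<lambda>e. \<Sum>j\<in>J. c j * y j e) e' = (\<Sum>j\<in>J. c j * Af fe (y j) e')" .
qed

lemma Af_add:
  assumes "fin x" "fin y"
  shows "Af fe (\<lambda>e. x e + y e) e' = Af fe x e' + Af fe y e'"
proof -
  let ?S = "chain_supp x \<union> chain_supp y"
  have f: "finite ?S" using assms by simp
  have "chain_supp (\<lambda>e. x e + y e) \<subseteq> ?S" by (auto simp: chain_supp_def)
  then show ?thesis
    by (simp add: Af_eq[OF f] Af_eq[OF f, of x] Af_eq[OF f, of y] sum.distrib distrib_right)
qed

lemma Af_single: "Af fe (\<lambda>e. c * (if e = a then 1 else 0)) e' = c * path_chain (fe a) e'"
  by (subst Af_eq[of "{a}"]) (auto simp: chain_supp_def)

lemma supp_path_chain: "chain_supp (path_chain ds) \<subseteq> fst ` set ds"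
proof (induction ds)
  case Nil then show ?case by (auto simp: chain_supp_def path_chain_Nil)
next
  case (Cons d ds) then show ?case by (auto simp: chain_supp_def path_chain_Cons split: if_splits)
qed

lemma fin_path_chain: "fin (path_chain ds)"
  by (rule finite_subset[OF supp_path_chain]) simp

definition fimg :: "('e \<Rightarrow> ('e \<times> bool) list) \<Rightarrow> 'e \<times> bool \<Rightarrow> ('e \<times> bool) list" where
  "fimg fe d = (if snd d then fe (fst d) else pinv (fe (fst d)))"

lemma path_chain_fimg: "path_chain (fimg fe d) e = (if snd d then 1 else -1) * path_chain (fe (fst d)) e"
  by (simp add: fimg_def path_chain_pinv)

lemma Af_path_chain: "Af fe (path_chain ds) = path_chain (concat (map (fimg fe) ds))"
proof (induction ds)
  case Nil
  then show ?case by (auto simp: Af_def chain_supp_def path_chain_Nil fun_eq_iff)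
next
  case (Cons d ds)
  define s where "s = (if snd d then 1 else -1 :: rat)"
  have pc: "path_chain (d # ds) = (\<lambda>e. s * (if e = fst d then 1 else 0) + path_chain ds e)"
    by (auto simp: fun_eq_iff path_chain_Cons s_def)
  have fs: "fin (\<lambda>e. s * (if e = fst d then 1 else 0))"
    by (rule finite_subset[of _ "{fst d}"]) (auto simp: chain_supp_def)
  show ?case
  proof
    fix e'
    have "Af fe (path_chain (d # ds)) e' = s * path_chain (fe (fst d)) e' + Af fe (path_chain ds) e'"
      unfolding pc by (simp add: Af_add[OF fs fin_path_chain] Af_single)
    also have "\<dots> = path_chain (concat (map (fimg fe) (d # ds))) e'"
      using Cons.IH by (simp add: path_chain_append path_chain_fimg s_def)
    finally show "Af fe (path_chain (d # ds)) e' = path_chain (concat (map (fimg fe) (d # ds))) e'" .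
  qed
qed

lemma path_fimg:
  assumes "\<And>e. path_from src tgt (fv (src e)) (fe e) (fv (tgt e))"
  shows "path_from src tgt u ds v \<Longrightarrow> path_from src tgt (fv u) (concat (map (fimg fe) ds)) (fv v)"
proof (induction ds arbitrary: u)
  case Nil then show ?case by simp
next
  case (Cons d ds)
  then have h: "ostart src tgt d = u" "path_from src tgt (oend src tgt d) ds v" by auto
  have "path_from src tgt (fv u) (fimg fe d) (fv (oend src tgt d))"
    using h(1) assms[of "fst d"] path_pinv[OF assms[of "fst d"]] by (auto simp: fimg_def ostart_def oend_def)
  then show ?case using Cons.IH[OF h(2)] by (auto simp: path_append)
qed

lemma path_chain_zero: "(\<And>d. d \<in> set ds \<Longrightarrow> fst d \<noteq> e') \<Longrightarrow> path_chain ds e' = 0"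
  by (induction ds) (auto simp: path_chain_Nil path_chain_Cons)

lemma AfH_rho:
  assumes tree: "is_tree src tgt"
    and paths: "\<And>e. path_from src tgt (fv (src e)) (fe e) (fv (tgt e))"
    and Hinv: "\<And>e d. e \<in> He \<Longrightarrow> d \<in> set (fe e) \<Longrightarrow> fst d \<in> He"
    and u: "fv u = u" and v: "fv v = v"
  shows "AfH He fe (projH He (geod_chain src tgt u v)) = projH He (geod_chain src tgt u v)"
proof -
  obtain ds where ds: "path_from src tgt u ds v"
    using tree unfolding is_tree_def by blast
  define c where "c = geod_chain src tgt u v"
  have c: "c = path_chain ds" using geod_path[OF tree ds] by (simp add: c_def)
  have Afc: "Af fe c = c"
  proof -
    have "Af fe c = path_chain (concat (map (fimg fe) ds))" using c Af_path_chain by simp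
    also have "\<dots> = geod_chain src tgt (fv u) (fv v)"
      using geod_path[OF tree path_fimg[OF paths ds]] by simp
    finally show ?thesis using u v by (simp add: c_def)
  qed
  define cH where "cH = (\<lambda>e. if e \<in> He then c e else 0)"
  have fc: "fin c" using c fin_path_chain by simp
  have f1: "fin (projH He c)" by (rule finite_subset[OF _ fc]) (auto simp: chain_supp_def projH_def)
  have f2: "fin cH" by (rule finite_subset[OF _ fc]) (auto simp: chain_supp_def cH_def)
  have split: "c = (\<lambda>e. projH He c e + cH e)" by (auto simp: fun_eq_iff projH_def cH_def)
  have zero: "Af fe cH e' = 0" if "e' \<notin> He" for e'
    unfolding Af_def
  proof (rule sum.neutral, rule ballI)
    fix e assume "e \<in> chain_supp cH"
    then have eH: "e \<in> He" by (auto simp: chain_supp_def cH_def split: if_splits)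
    have "path_chain (fe e) e' = 0"
      by (rule path_chain_zero) (use Hinv[OF eH] that in blast)
    then show "cH e * path_chain (fe e) e' = 0" by simp
  qed
  show ?thesis
  proof
    fix e'
    show "AfH He fe (projH He (geod_chain src tgt u v)) e' = projH He (geod_chain src tgt u v) e'"
    proof (cases "e' \<in> He")
      case True then show ?thesis by (simp add: AfH_def projH_def)
    next
      case False
      have "Af fe c e' = Af fe (projH He c) e' + Af fe cH e'"
        by (subst split) (rule Af_add[OF f1 f2])
      then show ?thesis using False zero[OF False] Afc
        by (simp add: AfH_def projH_def c_def)
    qed
  qed
qed



context
  fixes G :: "('g, 'z) monoid_scheme" and act :: "'g \<Rightarrow> 'v \<Rightarrow> 'v" and acte :: "'g \<Rightarrow> 'e \<Rightarrow> 'e"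
    and src tgt :: "'e \<Rightarrow> 'v"
  assumes deck: "deck_action G act acte src tgt"
begin

lemma grp: "group G" using deck by (simp add: deck_action_def)

lemma acte_mult: "g \<in> carrier G \<Longrightarrow> h \<in> carrier G \<Longrightarrow> acte g (acte h e) = acte (g \<otimes>\<^bsub>G\<^esub> h) e"
  using deck by (simp add: deck_action_def)

lemma acte_one: "acte \<one>\<^bsub>G\<^esub> e = e"
  using deck by (simp add: deck_action_def)

lemma acte_inv1: "g \<in> carrier G \<Longrightarrow> acte (inv\<^bsub>G\<^esub> g) (acte g e) = e"
  by (simp add: acte_mult group.inv_closed[OF grp] group.l_inv[OF grp] acte_one)

lemma acte_inv2: "g \<in> carrier G \<Longrightarrow> acte g (acte (inv\<^bsub>G\<^esub> g) e) = e"
  by (simp add: acte_mult group.inv_closed[OF grp] group.r_inv[OF grp] acte_one)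

lemma acte_fix: "g \<in> carrier G \<Longrightarrow> acte g e = e \<Longrightarrow> g = \<one>\<^bsub>G\<^esub>"
proof -
  assume g: "g \<in> carrier G" and e: "acte g e = e"
  have "src (acte g e) = act g (src e)" using deck g by (simp add: deck_action_def)
  then have "act g (src e) = src e" using e by simp
  moreover have "\<forall>g\<in>carrier G. \<forall>v. act g v = v \<longrightarrow> g = \<one>\<^bsub>G\<^esub>" using deck unfolding deck_action_def by (elim conjE) assumption
  ultimately show "g = \<one>\<^bsub>G\<^esub>" using g by blast
qed

lemma acte_inj: "a \<in> carrier G \<Longrightarrow> b \<in> carrier G \<Longrightarrow> acte a e = acte b e \<Longrightarrow> a = b"
proof -
  assume a: "a \<in> carrier G" and b: "b \<in> carrier G" and eq: "acte a e = acte b e"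
  have ib: "inv\<^bsub>G\<^esub> b \<in> carrier G" using b grp by (simp add: group.inv_closed)
  have "acte (inv\<^bsub>G\<^esub> b \<otimes>\<^bsub>G\<^esub> a) e = e"
    using acte_mult[OF ib a, of e] eq acte_inv1[OF b, of e] by argo
  then have "inv\<^bsub>G\<^esub> b \<otimes>\<^bsub>G\<^esub> a = \<one>\<^bsub>G\<^esub>"
    using acte_fix ib a grp by (simp add: monoid.m_closed group.is_monoid)
  then show "a = b" using a b grp
    by (metis group.inv_equality group.inv_inv group.inv_closed)
qed

lemma inj_acte: "g \<in> carrier G \<Longrightarrow> inj (acte g)"
  by (metis acte_inv1 injI)

lemma path_chain_shift: "h \<in> carrier G \<Longrightarrow>
   path_chain (map (\<lambda>d. (acte h (fst d), snd d)) ds) e' = path_chain ds (acte (inv\<^bsub>G\<^esub> h) e')"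
proof (induction ds)
  case Nil then show ?case by (simp add: path_chain_Nil)
next
  case (Cons d ds)
  have "acte h (fst d) = e' \<longleftrightarrow> fst d = acte (inv\<^bsub>G\<^esub> h) e'"
    using acte_inv1[OF Cons.prems, of "fst d"] acte_inv2[OF Cons.prems, of e'] by auto
  then show ?case using Cons by (simp add: path_chain_Cons)
qed

lemma supp_act: "g \<in> carrier G \<Longrightarrow> chain_supp (chain_act G acte g x) \<subseteq> acte g ` chain_supp x"
proof
  fix e assume g: "g \<in> carrier G" and "e \<in> chain_supp (chain_act G acte g x)"
  then have "acte (inv\<^bsub>G\<^esub> g) e \<in> chain_supp x" by (simp add: chain_supp_def chain_act_def)
  moreover have "e = acte g (acte (inv\<^bsub>G\<^esub> g) e)" using acte_inv2[OF g] by simp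
  ultimately show "e \<in> acte g ` chain_supp x" by blast
qed

lemma fin_act: "g \<in> carrier G \<Longrightarrow> fin x \<Longrightarrow> fin (chain_act G acte g x)"
  by (rule finite_subset[OF supp_act]) auto

lemma Phi_closed: "Phi \<in> iso G G \<Longrightarrow> g \<in> carrier G \<Longrightarrow> Phi g \<in> carrier G"
  by (auto simp: iso_def hom_def)

lemma Af_equiv:
  assumes lm: "lifted_map G act acte src tgt Phi fv fe" and g: "g \<in> carrier G" and fx: "fin x"
  shows "Af fe (chain_act G acte g x) = chain_act G acte (Phi g) (Af fe x)"
proof
  fix e'
  let ?S = "chain_supp x"
  have fe: "\<And>e. fe (acte g e) = map (\<lambda>d. (acte (Phi g) (fst d), snd d)) (fe e)"
    using lm g by (simp add: lifted_map_def)
  have Pg: "Phi g \<in> carrier G" using lm g Phi_closed by (simp add: lifted_map_def)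
  have "Af fe (chain_act G acte g x) e' = (\<Sum>e\<in>acte g ` ?S. chain_act G acte g x e * path_chain (fe e) e')"
    by (rule Af_eq) (use fx supp_act[OF g] in auto)
  also have "\<dots> = (\<Sum>s\<in>?S. chain_act G acte g x (acte g s) * path_chain (fe (acte g s)) e')"
    by (rule sum.reindex_cong[OF inj_on_subset[OF inj_acte[OF g]]]) auto
  also have "\<dots> = (\<Sum>s\<in>?S. x s * path_chain (fe s) (acte (inv\<^bsub>G\<^esub> (Phi g)) e'))"
    by (simp add: chain_act_def acte_inv1[OF g] fe path_chain_shift[OF Pg])
  also have "\<dots> = chain_act G acte (Phi g) (Af fe x) e'"
    by (simp add: chain_act_def Af_def)
  finally show "Af fe (chain_act G acte g x) e' = chain_act G acte (Phi g) (Af fe x) e'" .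
qed

lemma projH_act:
  assumes Hinv: "\<And>g e. g \<in> carrier G \<Longrightarrow> e \<in> He \<Longrightarrow> acte g e \<in> He" and h: "h \<in> carrier G"
  shows "projH He (chain_act G acte h y) = chain_act G acte h (projH He y)"
proof -
  have ih: "inv\<^bsub>G\<^esub> h \<in> carrier G" using h grp by (simp add: group.inv_closed)
  have "e \<in> He \<longleftrightarrow> acte (inv\<^bsub>G\<^esub> h) e \<in> He" for e
    using Hinv[OF ih, of e] Hinv[OF h, of "acte (inv\<^bsub>G\<^esub> h) e"] acte_inv2[OF h] by auto
  then show ?thesis by (auto simp: fun_eq_iff projH_def chain_act_def)
qed

end


lemma cauchy_schwarz_card:
  fixes a :: "'j \<Rightarrow> rat"
  assumes "finite J"
  shows "(\<Sum>j\<in>J. a j)^2 \<le> of_nat (card J) * (\<Sum>j\<in>J. (a j)^2)"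
proof -
  have "0 \<le> (\<Sum>i\<in>J. \<Sum>j\<in>J. (a i - a j)^2)" by (intro sum_nonneg) auto
  also have "\<dots> = (\<Sum>i\<in>J. \<Sum>j\<in>J. (a i)^2 + (a j)^2 - 2 * (a i * a j))"
    by (simp add: power2_diff algebra_simps)
  also have "\<dots> = 2 * (of_nat (card J) * (\<Sum>j\<in>J. (a j)^2)) - 2 * (\<Sum>j\<in>J. a j)^2"
  proof -
    have s1: "(\<Sum>i\<in>J. \<Sum>j\<in>J. (a i)^2) = of_nat (card J) * (\<Sum>j\<in>J. (a j)^2)"
      by (simp add: sum_distrib_left mult.commute)
    have s2: "(\<Sum>i\<in>J. \<Sum>j\<in>J. (a j)^2) = of_nat (card J) * (\<Sum>j\<in>J. (a j)^2)"
      by simp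
    have s3: "(\<Sum>i\<in>J. \<Sum>j\<in>J. a i * a j) = (\<Sum>j\<in>J. a j)^2"
    proof -
      have "(\<Sum>i\<in>J. \<Sum>j\<in>J. a i * a j) = (\<Sum>i\<in>J. a i * sum a J)" by (simp add: sum_distrib_left)
      also have "\<dots> = (sum a J)^2" unfolding power2_eq_square by (rule sum_distrib_right[symmetric])
      finally show ?thesis .
    qed
    have s4: "(\<Sum>i\<in>J. a i * sum a J) = (sum a J)^2" unfolding power2_eq_square by (rule sum_distrib_right[symmetric])
    show ?thesis
      by (simp add: sum_subtractf sum.distrib s1 s2 sum_distrib_left[symmetric] s3 s4)
  qed
  finally show ?thesis by simp
qed

context
  fixes G :: "('g, 'z) monoid_scheme" and act :: "'g \<Rightarrow> 'v \<Rightarrow> 'v" and acte :: "'g \<Rightarrow> 'e \<Rightarrow> 'e"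
    and src tgt :: "'e \<Rightarrow> 'v"
  assumes deck: "deck_action G act acte src tgt"
begin

lemma norm_bounds:
  fixes rho :: "'e \<Rightarrow> rat" and h :: "nat \<Rightarrow> 'g" and q :: "nat \<Rightarrow> rat"
  assumes frho: "fin rho" and e0: "rho e0 = 1 \<or> rho e0 = -1"
    and iso: "\<And>g. g \<in> carrier G \<Longrightarrow> g \<noteq> \<one>\<^bsub>G\<^esub> \<Longrightarrow> rho (acte g e0) = 0"
    and h: "\<And>j. j < n \<Longrightarrow> h j \<in> carrier G" and hinj: "inj_on h {..<n}"
  defines "z \<equiv> (\<lambda>e. \<Sum>j<n. q j * rho (acte (inv\<^bsub>G\<^esub> (h j)) e))"
  shows "(\<Sum>j<n. (q j)^2) \<le> normsq z \<and> normsq z \<le> of_nat (card (chain_supp rho)) * normsq rho * (\<Sum>j<n. (q j)^2)"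
proof -
  define S where "S = chain_supp rho"
  define T where "T = (\<Union>j<n. acte (h j) ` S)"
  define N where "N = card S"
  have fS: "finite S" using frho by (simp add: S_def)
  have fT: "finite T" using fS by (simp add: T_def)
  have ih: "\<And>j. j < n \<Longrightarrow> inv\<^bsub>G\<^esub> (h j) \<in> carrier G" using h grp[OF deck] by (simp add: group.inv_closed)
  have suppz: "chain_supp z \<subseteq> T"
  proof
    fix e assume "e \<in> chain_supp z"
    then have "(\<Sum>j<n. q j * rho (acte (inv\<^bsub>G\<^esub> (h j)) e)) \<noteq> 0" by (simp add: chain_supp_def z_def)
    then obtain j where j: "j < n" "q j * rho (acte (inv\<^bsub>G\<^esub> (h j)) e) \<noteq> 0"
      by (meson lessThan_iff sum.not_neutral_contains_not_neutral)
    then have "acte (inv\<^bsub>G\<^esub> (h j)) e \<in> S" by (simp add: S_def chain_supp_def)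
    moreover have "e = acte (h j) (acte (inv\<^bsub>G\<^esub> (h j)) e)" using acte_inv2[OF deck h[OF j(1)]] by simp
    ultimately show "e \<in> T" using j(1) unfolding T_def by blast
  qed
  have nz: "normsq z = (\<Sum>e\<in>T. (z e)^2)"
    unfolding normsq_def by (rule sum.mono_neutral_left[OF fT suppz]) (auto simp: chain_supp_def)
  have e0S: "e0 \<in> S" using e0 by (auto simp: S_def chain_supp_def)
  have r0: "(rho e0)^2 = 1" using e0 by auto
  have zval: "z (acte (h j) e0) = q j * rho e0" if j: "j < n" for j
  proof -
    have "z (acte (h j) e0) = (\<Sum>i<n. if i = j then q j * rho e0 else 0)"
      unfolding z_def
    proof (rule sum.cong[OF refl])
      fix i assume i: "i \<in> {..<n}"
      show "q i * rho (acte (inv\<^bsub>G\<^esub> (h i)) (acte (h j) e0)) = (if i = j then q j * rho e0 else 0)"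
      proof (cases "i = j")
        case True then show ?thesis using acte_inv1[OF deck h[OF j]] by simp
      next
        case False
        have hi: "h i \<in> carrier G" using i h by simp
        have m: "inv\<^bsub>G\<^esub> (h i) \<otimes>\<^bsub>G\<^esub> h j \<in> carrier G"
          using ih[of i] i h[OF j] grp[OF deck] by (simp add: monoid.m_closed group.is_monoid)
        have "inv\<^bsub>G\<^esub> (h i) \<otimes>\<^bsub>G\<^esub> h j \<noteq> \<one>\<^bsub>G\<^esub>"
        proof
          assume "inv\<^bsub>G\<^esub> (h i) \<otimes>\<^bsub>G\<^esub> h j = \<one>\<^bsub>G\<^esub>"
          then have "inv\<^bsub>G\<^esub> (h j) = inv\<^bsub>G\<^esub> (h i)"
            using group.inv_equality[OF grp[OF deck]] ih[of i] i h[OF j] by simp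
          then have "h j = h i" using grp[OF deck] hi h[OF j] by (metis group.inv_inv)
          then show False using hinj i j False by (auto simp: inj_on_def)
        qed
        then have "rho (acte (inv\<^bsub>G\<^esub> (h i) \<otimes>\<^bsub>G\<^esub> h j) e0) = 0" using iso m by simp
        then show ?thesis using False acte_mult[OF deck ih[of i] h[OF j]] i by simp
      qed
    qed
    also have "\<dots> = q j * rho e0" using j by simp
    finally show ?thesis .
  qed
  have injE0: "inj_on (\<lambda>j. acte (h j) e0) {..<n}"
  proof (rule inj_onI)
    fix i j assume "i \<in> {..<n}" "j \<in> {..<n}" "acte (h i) e0 = acte (h j) e0"
    then have "h i = h j" using acte_inj[OF deck] h by simp
    then show "i = j" using hinj \<open>i \<in> {..<n}\<close> \<open>j \<in> {..<n}\<close> by (auto simp: inj_on_def)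
  qed
  have "(\<Sum>j<n. (q j)^2) = (\<Sum>j<n. (z (acte (h j) e0))^2)"
    using zval r0 by (simp add: power_mult_distrib)
  also have "\<dots> = (\<Sum>e\<in>(\<lambda>j. acte (h j) e0) ` {..<n}. (z e)^2)"
    using sum.reindex[OF injE0, of "\<lambda>e. (z e)^2"] by simp
  also have "\<dots> \<le> (\<Sum>e\<in>T. (z e)^2)"
    by (rule sum_mono2[OF fT]) (use e0S in \<open>auto simp: T_def\<close>)
  finally have lower: "(\<Sum>j<n. (q j)^2) \<le> normsq z" using nz by simp
  have pt: "(z e)^2 \<le> of_nat N * (\<Sum>j<n. (q j * rho (acte (inv\<^bsub>G\<^esub> (h j)) e))^2)" for e
  proof -
    define a where "a = (\<lambda>j. q j * rho (acte (inv\<^bsub>G\<^esub> (h j)) e))"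
    define Je where "Je = {j\<in>{..<n}. acte (inv\<^bsub>G\<^esub> (h j)) e \<in> S}"
    have fJ: "finite Je" by (simp add: Je_def)
    have zJ: "z e = (\<Sum>j\<in>Je. a j)"
      unfolding z_def a_def
      by (rule sum.mono_neutral_right) (auto simp: Je_def S_def chain_supp_def)
    have cJ: "card Je \<le> N"
      unfolding N_def
    proof (rule card_inj_on_le[OF _ _ fS])
      show "inj_on (\<lambda>j. acte (inv\<^bsub>G\<^esub> (h j)) e) Je"
      proof (rule inj_onI)
        fix i j assume ij: "i \<in> Je" "j \<in> Je" "acte (inv\<^bsub>G\<^esub> (h i)) e = acte (inv\<^bsub>G\<^esub> (h j)) e"
        then have "inv\<^bsub>G\<^esub> (h i) = inv\<^bsub>G\<^esub> (h j)" using acte_inj[OF deck] ih by (simp add: Je_def)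
        then have "h i = h j" using grp[OF deck] h ij(1,2) by (metis Je_def group.inv_inv lessThan_iff mem_Collect_eq)
        then show "i = j" using hinj ij by (auto simp: inj_on_def Je_def)
      qed
      show "(\<lambda>j. acte (inv\<^bsub>G\<^esub> (h j)) e) ` Je \<subseteq> S" by (auto simp: Je_def)
    qed
    have "(z e)^2 \<le> of_nat (card Je) * (\<Sum>j\<in>Je. (a j)^2)"
      unfolding zJ by (rule cauchy_schwarz_card[OF fJ])
    also have "\<dots> \<le> of_nat N * (\<Sum>j<n. (a j)^2)"
      by (rule mult_mono) (use cJ in \<open>auto intro!: sum_mono2 sum_nonneg simp: Je_def\<close>)
    finally show ?thesis by (simp add: a_def)
  qed
  have colsum: "(\<Sum>e\<in>T. (rho (acte (inv\<^bsub>G\<^esub> (h j)) e))^2) = normsq rho" if j: "j < n" for j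
  proof -
    have "(\<Sum>e\<in>T. (rho (acte (inv\<^bsub>G\<^esub> (h j)) e))^2) = (\<Sum>e\<in>acte (h j) ` S. (rho (acte (inv\<^bsub>G\<^esub> (h j)) e))^2)"
    proof (rule sum.mono_neutral_right[OF fT])
      show "acte (h j) ` S \<subseteq> T" using j by (auto simp: T_def)
      show "\<forall>i\<in>T - acte (h j) ` S. (rho (acte (inv\<^bsub>G\<^esub> (h j)) i))^2 = 0"
      proof
        fix e assume "e \<in> T - acte (h j) ` S"
        moreover have "e = acte (h j) (acte (inv\<^bsub>G\<^esub> (h j)) e)" using acte_inv2[OF deck h[OF j]] by simp
        ultimately have "acte (inv\<^bsub>G\<^esub> (h j)) e \<notin> S" by (metis DiffD2 image_eqI)
        then show "(rho (acte (inv\<^bsub>G\<^esub> (h j)) e))^2 = 0" by (simp add: S_def chain_supp_def)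
      qed
    qed
    also have "\<dots> = (\<Sum>s\<in>S. (rho s)^2)"
      by (subst sum.reindex[OF inj_on_subset[OF inj_acte[OF deck h[OF j]]]]) (auto simp: acte_inv1[OF deck h[OF j]])
    finally show ?thesis by (simp add: normsq_def S_def)
  qed
  have "normsq z \<le> (\<Sum>e\<in>T. of_nat N * (\<Sum>j<n. (q j * rho (acte (inv\<^bsub>G\<^esub> (h j)) e))^2))"
    unfolding nz by (rule sum_mono) (rule pt)
  also have "\<dots> = of_nat N * (\<Sum>j<n. (q j)^2 * (\<Sum>e\<in>T. (rho (acte (inv\<^bsub>G\<^esub> (h j)) e))^2))"
  proof -
    have "(\<Sum>e\<in>T. \<Sum>j<n. (q j * rho (acte (inv\<^bsub>G\<^esub> (h j)) e))^2)
       = (\<Sum>j<n. \<Sum>e\<in>T. (q j)^2 * (rho (acte (inv\<^bsub>G\<^esub> (h j)) e))^2)"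
      by (subst sum.swap) (simp add: power_mult_distrib)
    then show ?thesis by (simp add: sum_distrib_left[symmetric])
  qed
  also have "\<dots> = of_nat N * (\<Sum>j<n. (q j)^2 * normsq rho)"
    by (simp add: colsum)
  finally have upper: "normsq z \<le> of_nat (card (chain_supp rho)) * normsq rho * (\<Sum>j<n. (q j)^2)"
    by (simp add: N_def S_def sum_distrib_left sum_distrib_right mult_ac)
  show ?thesis using lower upper by simp
qed

end


theorem lemma5p2:
  fixes G :: "('g, 'z) monoid_scheme"
    and act :: "'g \<Rightarrow> 'v \<Rightarrow> 'v" and acte :: "'g \<Rightarrow> 'e \<Rightarrow> 'e"
    and src tgt :: "'e \<Rightarrow> 'v" and Phi :: "'g \<Rightarrow> 'g"
    and fv :: "'v \<Rightarrow> 'v" and fe :: "'e \<Rightarrow> ('e \<times> bool) list"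
    and Hv :: "'v set" and He :: "'e set" and rho :: "'e \<Rightarrow> rat"
  assumes "is_tree src tgt"
    and "deck_action G act acte src tgt"
    and "lifted_map G act acte src tgt Phi fv fe"
    and "invariant_subgraph G act acte src tgt fv fe Hv He"
    and "nongeometric_nielsen G acte src tgt fv He rho"
  shows "\<exists>B::rat. B \<ge> 1 \<and>
    (\<forall>(gs :: 'g list) (qs :: rat list) (k :: nat).
       distinct gs \<and> set gs \<subseteq> carrier G \<and> length qs = length gs \<longrightarrow>
       (let x = (\<lambda>e. \<Sum>j<length gs. qs ! j * chain_act G acte (gs ! j) rho e)
        in (\<Sum>j<length qs. (qs ! j)^2) \<le> normsq ((AfH He fe ^^ k) x) \<and>
           normsq ((AfH He fe ^^ k) x) \<le> B * (\<Sum>j<length qs. (qs ! j)^2)))"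
proof -
  note tree = assms(1) and deck = assms(2) and lm = assms(3)
  have paths: "\<And>e. path_from src tgt (fv (src e)) (fe e) (fv (tgt e))"
    using lm by (simp add: lifted_map_def)
  have isoP: "Phi \<in> iso G G" using lm by (simp add: lifted_map_def)
  have Hf: "\<And>e d. e \<in> He \<Longrightarrow> d \<in> set (fe e) \<Longrightarrow> fst d \<in> He"
    using assms(4) by (simp add: invariant_subgraph_def)
  have Ha: "\<And>g e. g \<in> carrier G \<Longrightarrow> e \<in> He \<Longrightarrow> acte g e \<in> He"
    using assms(4) by (simp add: invariant_subgraph_def)
  obtain u v e0 where uv: "fv u = u" "fv v = v" and rho: "rho = projH He (geod_chain src tgt u v)"
    and e0: "rho e0 = 1 \<or> rho e0 = -1"
    and e0iso: "\<And>g. g \<in> carrier G \<Longrightarrow> g \<noteq> \<one>\<^bsub>G\<^esub> \<Longrightarrow> rho (acte g e0) = 0"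
    using assms(5) unfolding nongeometric_nielsen_def by blast
  have rfix: "AfH He fe rho = rho"
    unfolding rho by (rule AfH_rho[OF tree paths Hf uv])
  have frho: "fin rho"
  proof -
    obtain ds where ds: "path_from src tgt u ds v" using tree unfolding is_tree_def by blast
    have "fin (geod_chain src tgt u v)" using geod_path[OF tree ds] fin_path_chain by simp
    then show ?thesis unfolding rho
      by (rule finite_subset[rotated]) (auto simp: chain_supp_def projH_def)
  qed
  have Pc: "\<And>g. g \<in> carrier G \<Longrightarrow> Phi g \<in> carrier G" using Phi_closed[OF deck isoP] .
  have act1: "AfH He fe (chain_act G acte g rho) = chain_act G acte (Phi g) rho" if g: "g \<in> carrier G" for g
  proof -
    have "AfH He fe (chain_act G acte g rho) = projH He (chain_act G acte (Phi g) (Af fe rho))"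
      by (simp add: AfH_def Af_equiv[OF deck lm g frho])
    also have "\<dots> = chain_act G acte (Phi g) (AfH He fe rho)"
      by (simp add: AfH_def projH_act[OF deck Ha Pc[OF g]])
    finally show ?thesis using rfix by simp
  qed
  have step: "AfH He fe (\<lambda>e. \<Sum>j<(n::nat). c j * chain_act G acte (hs j) rho e)
      = (\<lambda>e. \<Sum>j<n. c j * chain_act G acte (Phi (hs j)) rho e)"
    if hs: "\<And>j. j < n \<Longrightarrow> hs j \<in> carrier G" for n c hs
  proof
    fix e'
    have "Af fe (\<lambda>e. \<Sum>j<n. c j * chain_act G acte (hs j) rho e) e'
        = (\<Sum>j<n. c j * Af fe (chain_act G acte (hs j) rho) e')"
      by (subst Af_lin) (simp_all add: fin_act[OF deck hs frho])
    moreover have "\<And>j. j < n \<Longrightarrow> projH He (Af fe (chain_act G acte (hs j) rho)) e' = chain_act G acte (Phi (hs j)) rho e'"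
      using act1[OF hs] by (simp add: AfH_def)
    ultimately show "AfH He fe (\<lambda>e. \<Sum>j<n. c j * chain_act G acte (hs j) rho e) e'
      = (\<Sum>j<n. c j * chain_act G acte (Phi (hs j)) rho e')"
      by (auto simp: AfH_def projH_def split: if_splits)
  qed
  have Pk: "(Phi ^^ k) g \<in> carrier G" if "g \<in> carrier G" for k g
    by (induction k) (auto simp: that Pc)
  have injP: "inj_on Phi (carrier G)" using isoP by (simp add: iso_def bij_betw_def)
  have injPk: "inj_on (Phi ^^ k) (carrier G)" for k
  proof (induction k)
    case 0 then show ?case by simp
  next
    case (Suc k)
    have "(Phi ^^ k) ` carrier G \<subseteq> carrier G" using Pk by blast
    then have "inj_on Phi ((Phi ^^ k) ` carrier G)" using injP inj_on_subset by blast
    then have "inj_on (Phi \<circ> (Phi ^^ k)) (carrier G)" by (rule comp_inj_on[OF Suc.IH])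
    then show ?case by (simp add: comp_def)
  qed
  define B where "B = of_nat (card (chain_supp rho)) * normsq rho"
  have e0S: "e0 \<in> chain_supp rho" using e0 by (auto simp: chain_supp_def)
  have B1: "B \<ge> 1"
  proof -
    have c: "card (chain_supp rho) \<ge> 1" using e0S frho
      by (metis One_nat_def Suc_leI card_gt_0_iff empty_iff)
    have "(rho e0)^2 \<le> normsq rho"
      unfolding normsq_def by (rule member_le_sum[OF e0S]) (auto simp: frho)
    then have n: "normsq rho \<ge> 1" using e0 by auto
    have "(1::rat) \<le> of_nat (card (chain_supp rho))" using c by simp
    then show ?thesis unfolding B_def using n
      by (metis mult_mono' mult_1 zero_le_one order_trans)
  qed
  show ?thesis
  proof (intro exI[of _ B] conjI allI impI B1)
    fix gs :: "'g list" and qs :: "rat list" and k :: nat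
    assume A: "distinct gs \<and> set gs \<subseteq> carrier G \<and> length qs = length gs"
    define n where "n = length gs"
    define x where "x = (\<lambda>e. \<Sum>j<length gs. qs ! j * chain_act G acte (gs ! j) rho e)"
    have gc: "\<And>j. j < n \<Longrightarrow> gs ! j \<in> carrier G" using A by (auto simp: n_def)
    have iter: "(AfH He fe ^^ k) x = (\<lambda>e. \<Sum>j<n. qs ! j * chain_act G acte ((Phi ^^ k) (gs ! j)) rho e)"
    proof (induction k)
      case 0 then show ?case by (simp add: x_def n_def)
    next
      case (Suc k)
      show ?case using step[of n "\<lambda>j. (Phi ^^ k) (gs ! j)" "\<lambda>j. qs ! j"] Pk gc Suc by simp
    qed
    define h where "h = (\<lambda>j. (Phi ^^ k) (gs ! j))"
    have hc: "\<And>j. j < n \<Longrightarrow> h j \<in> carrier G" using Pk gc by (simp add: h_def)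
    have hinj: "inj_on h {..<n}"
    proof (rule inj_onI)
      fix i j assume ij: "i \<in> {..<n}" "j \<in> {..<n}" "h i = h j"
      then have "gs ! i = gs ! j" using injPk[of k] gc by (auto simp: h_def inj_on_def)
      then show "i = j" using A ij by (simp add: n_def nth_eq_iff_index_eq)
    qed
    note nb = norm_bounds[OF deck frho e0 e0iso hc hinj, of "\<lambda>j. qs ! j"]
    have xe: "(AfH He fe ^^ k) x = (\<lambda>e. \<Sum>j<n. qs ! j * rho (acte (inv\<^bsub>G\<^esub> (h j)) e))"
      by (simp add: iter h_def chain_act_def)
    have len: "length qs = n" using A by (simp add: n_def)
    show "let x = (\<lambda>e. \<Sum>j<length gs. qs ! j * chain_act G acte (gs ! j) rho e)
        in (\<Sum>j<length qs. (qs ! j)^2) \<le> normsq ((AfH He fe ^^ k) x) \<and>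
           normsq ((AfH He fe ^^ k) x) \<le> B * (\<Sum>j<length qs. (qs ! j)^2)"
      unfolding Let_def x_def[symmetric] xe len B_def using nb by simp
  qed
qed


end
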